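(* Let $Y\subset\mathbb{R}^n$ be open and let $\omega\colon Y\to\mathbb{R}^n$, $F\colon Y\to\mathbb{R}$ and $D^\pm\colon Y\times Y\to\mathbb{R}^n$ be arbitrary functions with $D^\pm(u,u)=0$ for all $u\in Y$. Then the following are equivalent: (A) there exists $F^{\mathrm{num}}\colon Y\times Y\to\mathbb{R}$ with $F^{\mathrm{num}}(u,u)=F(u)$ such that for all $u_-,u_0,u_+\in Y$, $$\omega(u_0)\cdot\big(D^+(u_-,u_0)+D^-(u_0,u_+)\big)\ \ge\ F^{\mathrm{num}}(u_0,u_+)-F^{\mathrm{num}}(u_-,u_0);$$ (B) for all $u_-,u_+\in Y$, $$\omega(u_+)\cdot D^+(u_-,u_+)+\omega(u_-)\cdot D^-(u_-,u_+)\ \ge\ F(u_+)-F(u_-).$$ Moreover, there exists a consistent $F^{\mathrm{num}}$ for which (A) holds with equality for all triples if and only if (B) holds with equality for all pairs, and then $F^{\mathrm{num}}$ is uniquely given by $$F^{\mathrm{num}}(u_-,u_+)=\tfrac12\big(F(u_+)+F(u_-)\big)+\tfrac12\,\omega(u_-)\cdot D^-(u_-,u_+)-\tfrac12\,\omega(u_+)\cdot D^+(u_-,u_+).$$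
   Context: No relation between $\omega$, $F$ and $D^\pm$ (and no convexity) is assumed; the statement is purely algebraic. *)

theory Defs
  imports "HOL-Analysis.Analysis"
begin

end

theory Submission
  imports Defs
begin

theorem mainTheorem3:
  fixes Y :: "(real ^ 'n) set"
    and \<omega> :: "real ^ 'n \<Rightarrow> real ^ 'n"
    and F :: "real ^ 'n \<Rightarrow> real"
    and Dp Dm :: "real ^ 'n \<Rightarrow> real ^ 'n \<Rightarrow> real ^ 'n"
  assumes "open Y"
    and "\<forall>u\<in>Y. Dp u u = 0"
    and "\<forall>u\<in>Y. Dm u u = 0"
  shows "((\<exists>Fn :: real ^ 'n \<Rightarrow> real ^ 'n \<Rightarrow> real.
              (\<forall>u\<in>Y. Fn u u = F u) \<and>
              (\<forall>um\<in>Y. \<forall>u0\<in>Y. \<forall>up\<in>Y.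
                 \<omega> u0 \<bullet> (Dp um u0 + Dm u0 up) \<ge> Fn u0 up - Fn um u0))
          \<longleftrightarrow>
          (\<forall>um\<in>Y. \<forall>up\<in>Y.
              \<omega> up \<bullet> Dp um up + \<omega> um \<bullet> Dm um up \<ge> F up - F um))
      \<and> ((\<exists>Fn :: real ^ 'n \<Rightarrow> real ^ 'n \<Rightarrow> real.
              (\<forall>u\<in>Y. Fn u u = F u) \<and>
              (\<forall>um\<in>Y. \<forall>u0\<in>Y. \<forall>up\<in>Y.
                 \<omega> u0 \<bullet> (Dp um u0 + Dm u0 up) = Fn u0 up - Fn um u0))
          \<longleftrightarrow>
          (\<forall>um\<in>Y. \<forall>up\<in>Y.
              \<omega> up \<bullet> Dp um up + \<omega> um \<bullet> Dm um up = F up - F um))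
      \<and> (\<forall>Fn :: real ^ 'n \<Rightarrow> real ^ 'n \<Rightarrow> real.
              ((\<forall>u\<in>Y. Fn u u = F u) \<and>
               (\<forall>um\<in>Y. \<forall>u0\<in>Y. \<forall>up\<in>Y.
                  \<omega> u0 \<bullet> (Dp um u0 + Dm u0 up) = Fn u0 up - Fn um u0))
              \<longrightarrow>
              (\<forall>um\<in>Y. \<forall>up\<in>Y.
                 Fn um up = (F up + F um) / 2 + (\<omega> um \<bullet> Dm um up) / 2
                            - (\<omega> up \<bullet> Dp um up) / 2))"
proof -
  define G where "G = (\<lambda>a b. (F b + F a) / 2 + (\<omega> a \<bullet> Dm a b) / 2 - (\<omega> b \<bullet> Dp a b) / 2)"
  have GD: "\<forall>u\<in>Y. G u u = F u" using assms(2,3) by (simp add: G_def)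
  have P1: "\<omega> up \<bullet> Dp um up \<ge> F up - Fn um up \<and> \<omega> um \<bullet> Dm um up \<ge> Fn um up - F um"
    if "\<forall>u\<in>Y. Fn u u = F u"
       "\<forall>um\<in>Y. \<forall>u0\<in>Y. \<forall>up\<in>Y. \<omega> u0 \<bullet> (Dp um u0 + Dm u0 up) \<ge> Fn u0 up - Fn um u0"
       "um \<in> Y" "up \<in> Y" for Fn um up
  proof -
    have a: "\<omega> up \<bullet> (Dp um up + Dm up up) \<ge> Fn up up - Fn um up" using that by blast
    have b: "\<omega> um \<bullet> (Dp um um + Dm um up) \<ge> Fn um up - Fn um um" using that by blast
    show ?thesis using a b that assms(2,3) by simp
  qed
  have E1: "\<omega> up \<bullet> Dp um up = F up - Fn um up \<and> \<omega> um \<bullet> Dm um up = Fn um up - F um"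
    if "\<forall>u\<in>Y. Fn u u = F u"
       "\<forall>um\<in>Y. \<forall>u0\<in>Y. \<forall>up\<in>Y. \<omega> u0 \<bullet> (Dp um u0 + Dm u0 up) = Fn u0 up - Fn um u0"
       "um \<in> Y" "up \<in> Y" for Fn um up
  proof -
    have a: "\<omega> up \<bullet> (Dp um up + Dm up up) = Fn up up - Fn um up" using that by blast
    have b: "\<omega> um \<bullet> (Dp um um + Dm um up) = Fn um up - Fn um um" using that by blast
    show ?thesis using a b that assms(2,3) by simp
  qed
  show ?thesis
  proof (intro conjI iffI allI impI ballI)
    fix um up assume "\<exists>Fn. (\<forall>u\<in>Y. Fn u u = F u) \<and>
              (\<forall>um\<in>Y. \<forall>u0\<in>Y. \<forall>up\<in>Y. \<omega> u0 \<bullet> (Dp um u0 + Dm u0 up) \<ge> Fn u0 up - Fn um u0)"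
      and u: "um \<in> Y" "up \<in> Y"
    then obtain Fn where "(\<forall>u\<in>Y. Fn u u = F u)"
      "(\<forall>um\<in>Y. \<forall>u0\<in>Y. \<forall>up\<in>Y. \<omega> u0 \<bullet> (Dp um u0 + Dm u0 up) \<ge> Fn u0 up - Fn um u0)" by blast
    from P1[OF this u] show "\<omega> up \<bullet> Dp um up + \<omega> um \<bullet> Dm um up \<ge> F up - F um" by linarith
  next
    assume B: "\<forall>um\<in>Y. \<forall>up\<in>Y. \<omega> up \<bullet> Dp um up + \<omega> um \<bullet> Dm um up \<ge> F up - F um"
    show "\<exists>Fn. (\<forall>u\<in>Y. Fn u u = F u) \<and>
              (\<forall>um\<in>Y. \<forall>u0\<in>Y. \<forall>up\<in>Y. \<omega> u0 \<bullet> (Dp um u0 + Dm u0 up) \<ge> Fn u0 up - Fn um u0)"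
    proof (intro exI conjI ballI)
      fix um u0 up assume u: "um \<in> Y" "u0 \<in> Y" "up \<in> Y"
      have "\<omega> up \<bullet> Dp u0 up + \<omega> u0 \<bullet> Dm u0 up \<ge> F up - F u0"
           "\<omega> u0 \<bullet> Dp um u0 + \<omega> um \<bullet> Dm um u0 \<ge> F u0 - F um" using B u by auto
      then show "\<omega> u0 \<bullet> (Dp um u0 + Dm u0 up) \<ge> G u0 up - G um u0"
        by (simp add: G_def inner_add_right field_simps)
    qed (rule GD[rule_format])
  next
    fix um up assume "\<exists>Fn. (\<forall>u\<in>Y. Fn u u = F u) \<and>
              (\<forall>um\<in>Y. \<forall>u0\<in>Y. \<forall>up\<in>Y. \<omega> u0 \<bullet> (Dp um u0 + Dm u0 up) = Fn u0 up - Fn um u0)"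
      and u: "um \<in> Y" "up \<in> Y"
    then obtain Fn where "(\<forall>u\<in>Y. Fn u u = F u)"
      "(\<forall>um\<in>Y. \<forall>u0\<in>Y. \<forall>up\<in>Y. \<omega> u0 \<bullet> (Dp um u0 + Dm u0 up) = Fn u0 up - Fn um u0)" by blast
    from E1[OF this u] show "\<omega> up \<bullet> Dp um up + \<omega> um \<bullet> Dm um up = F up - F um" by linarith
  next
    assume B: "\<forall>um\<in>Y. \<forall>up\<in>Y. \<omega> up \<bullet> Dp um up + \<omega> um \<bullet> Dm um up = F up - F um"
    show "\<exists>Fn. (\<forall>u\<in>Y. Fn u u = F u) \<and>
              (\<forall>um\<in>Y. \<forall>u0\<in>Y. \<forall>up\<in>Y. \<omega> u0 \<bullet> (Dp um u0 + Dm u0 up) = Fn u0 up - Fn um u0)"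
    proof (intro exI conjI ballI)
      fix um u0 up assume u: "um \<in> Y" "u0 \<in> Y" "up \<in> Y"
      have "\<omega> up \<bullet> Dp u0 up + \<omega> u0 \<bullet> Dm u0 up = F up - F u0"
           "\<omega> u0 \<bullet> Dp um u0 + \<omega> um \<bullet> Dm um u0 = F u0 - F um" using B u by auto
      then show "\<omega> u0 \<bullet> (Dp um u0 + Dm u0 up) = G u0 up - G um u0"
        by (simp add: G_def inner_add_right field_simps)
    qed (rule GD[rule_format])
  next
    fix Fn um up
    assume H: "(\<forall>u\<in>Y. Fn u u = F u) \<and>
               (\<forall>um\<in>Y. \<forall>u0\<in>Y. \<forall>up\<in>Y. \<omega> u0 \<bullet> (Dp um u0 + Dm u0 up) = Fn u0 up - Fn um u0)"
      and u: "um \<in> Y" "up \<in> Y"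
    from E1[OF H[THEN conjunct1] H[THEN conjunct2] u]
    show "Fn um up = (F up + F um) / 2 + (\<omega> um \<bullet> Dm um up) / 2 - (\<omega> up \<bullet> Dp um up) / 2"
      by (simp add: field_simps)
  qed
qed

end
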